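(* $$1\le\liminf_{j\to+\infty}\frac{\log p^{(j)}_j}{j\log j}\le\limsup_{j\to+\infty}\frac{\log p^{(j)}_j}{j\log j}\le2.$$
   Context: Let $p_n$ denote the $n$-th prime number. Define $p^{(0)}_n=n$ and recursively $p^{(k+1)}_n=p_{p^{(k)}_n}$ for $k\in\mathbb N_0$. $\log$ is the natural logarithm. *)

theory Defs
  imports "HOL-Analysis.Analysis" "HOL-Computational_Algebra.Primes" "HOL-Library.Infinite_Set"
begin

text \<open>The n-th prime number, 1-indexed: nth_prime 1 = 2, nth_prime 2 = 3, ...
  (nth_prime 0 is a junk value, 0; it never occurs in the statement.)\<close>
definition nth_prime :: "nat \<Rightarrow> nat" where
  "nth_prime n = (if n = 0 then 0 else enumerate {p::nat. prime p} (n - 1))"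

definition iter_prime :: "nat \<Rightarrow> nat \<Rightarrow> nat" where
  "iter_prime k n = (nth_prime ^^ k) n"

end

theory Submission
  imports Defs "HOL-Real_Asymp.Real_Asymp"
begin

abbreviation PR where "PR \<equiv> {p::nat. prime p}"

lemma inf_PR: "infinite PR" using primes_infinite by simp

lemma enum_ge: "enumerate PR i \<ge> i + 2"
proof (induction i)
  case 0
  have "prime (enumerate PR 0)" using enumerate_in_set[OF inf_PR] by simp
  then have "2 \<le> enumerate PR 0" by (rule prime_ge_2_nat)
  then show ?case by simp
next
  case (Suc i)
  then show ?case using enumerate_step[OF inf_PR, of i] by simp
qed

lemma nth_prime_prime: "n \<ge> 1 \<Longrightarrow> prime (nth_prime n)"
  using enumerate_in_set[OF inf_PR] by (simp add: nth_prime_def)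

lemma nth_prime_ge: "n \<ge> 1 \<Longrightarrow> nth_prime n \<ge> n + 1"
  using enum_ge[of "n-1"] by (simp add: nth_prime_def)

lemma pi_le:
  assumes "n \<ge> 1" "x < nth_prime n"
  shows "card {q. prime q \<and> q \<le> x} \<le> n - 1"
proof -
  have "{q. prime q \<and> q \<le> x} \<subseteq> enumerate PR ` {..<n-1}"
  proof
    fix q assume q: "q \<in> {q. prime q \<and> q \<le> x}"
    then obtain i where i: "enumerate PR i = q" using enumerate_Ex[OF inf_PR, of q] by auto
    have "enumerate PR i < enumerate PR (n-1)" using q i assms by (simp add: nth_prime_def)
    then have "i < n - 1" using inf_PR by simp
    then show "q \<in> enumerate PR ` {..<n-1}" using i by blast
  qed
  then have "card {q. prime q \<and> q \<le> x} \<le> card (enumerate PR ` {..<n-1})"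
    by (rule card_mono[rotated]) simp
  also have "\<dots> \<le> n - 1" using card_image_le[of "{..<n-1}" "enumerate PR"] by simp
  finally show ?thesis .
qed

definition prim :: "nat \<Rightarrow> nat" where "prim m = \<Prod> {p. prime p \<and> p \<le> m}"

lemma prod_primes_dvd:
  fixes B :: "nat set"
  assumes "finite B" "\<forall>p\<in>B. prime p \<and> p dvd c"
  shows "\<Prod>B dvd c"
  using assms
proof (induction B rule: finite_induct)
  case empty then show ?case by simp
next
  case (insert p B)
  have "coprime p (\<Prod>B)"
  proof -
    have "\<not> p dvd \<Prod>B"
    proof
      assume "p dvd \<Prod>B"
      then obtain q where "q \<in> B" "p dvd q" using prime_dvd_prod_iff[of B p id] insert by auto
      moreover have "prime p" "prime q" using insert \<open>q \<in> B\<close> by auto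
      ultimately have "p = q" using primes_dvd_imp_eq by blast
      then show False using insert \<open>q \<in> B\<close> by simp
    qed
    then show ?thesis using insert prime_imp_coprime by auto
  qed
  then show ?case using insert by (simp add: divides_mult)
qed

lemma central_le: "(2*k+1) choose k \<le> 4^k"
proof -
  have s: "(2*k+1) choose k = (2*k+1) choose (k+1)"
    using binomial_symmetric[of k "2*k+1"] by simp
  have "((2*k+1) choose k) + ((2*k+1) choose (k+1)) \<le> (\<Sum>i\<le>2*k+1. (2*k+1) choose i)"
  proof -
    have "{k, k+1} \<subseteq> {..2*k+1}" by auto
    then have "(\<Sum>i\<in>{k,k+1}. (2*k+1) choose i) \<le> (\<Sum>i\<le>2*k+1. (2*k+1) choose i)"
      by (intro sum_mono2) auto
    then show ?thesis by simp
  qed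
  also have "\<dots> = 2 ^ (2*k+1)" by (rule choose_row_sum)
  also have "\<dots> = 2 * 4^k" by (simp add: power_mult)
  finally show ?thesis using s by linarith
qed

lemma t1: "{p. prime p \<and> p \<le> (1::nat)} = {}"
proof -
  have "\<not> (prime p \<and> p \<le> 1)" for p :: nat
  proof
    assume "prime p \<and> p \<le> 1"
    then have "2 \<le> p" "p \<le> 1" using prime_ge_2_nat by blast+
    then show False by simp
  qed
  then show ?thesis by blast
qed
lemma t2: "{p. prime p \<and> p \<le> (2::nat)} = {2}"
proof -
  have "(prime p \<and> p \<le> 2) \<longleftrightarrow> p = 2" for p :: nat
  proof
    assume "prime p \<and> p \<le> 2"
    then have "2 \<le> p" "p \<le> 2" using prime_ge_2_nat by blast+
    then show "p = 2" by simp
  qed simp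
  then show ?thesis by blast
qed
lemma t3: "prim 2 = 2" unfolding prim_def t2 by simp
lemma t0: "{p. prime p \<and> p \<le> (0::nat)} = {}" using t1 by auto

lemma prim_le: "prim m \<le> 4^m"
proof (induction m rule: less_induct)
  case (less m)
  show ?case
  proof (cases "m \<le> 2")
    case True
    then have "m = 0 \<or> m = 1 \<or> m = 2" by auto
    moreover have "prim 0 = 1" unfolding prim_def t0 by simp
    moreover have "prim 1 = 1" unfolding prim_def t1 by simp
    ultimately show ?thesis using t3 by auto
  next
    case False
    show ?thesis
    proof (cases "even m")
      case True
      then have "\<not> prime m" using False prime_odd_nat[of m] by auto
      have "p \<le> m \<longleftrightarrow> p \<le> m - 1" if "prime p" for p
        using that \<open>\<not> prime m\<close> False by (cases "p = m") auto
      then have "{p. prime p \<and> p \<le> m} = {p. prime p \<and> p \<le> m - 1}"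
        by blast
      then have "prim m = prim (m-1)" by (simp add: prim_def)
      also have "\<dots> \<le> 4^(m-1)" using less False by simp
      also have "\<dots> \<le> 4^m" by simp
      finally show ?thesis .
    next
      case odd: False
      then obtain k where m: "m = 2*k+1" using oddE by blast
      with False have k1: "k \<ge> 1" by simp
      define A where "A = {p. prime p \<and> p \<le> k+1}"
      define B where "B = {p. prime p \<and> k+1 < p \<and> p \<le> 2*k+1}"
      have fA: "finite A" "finite B" unfolding A_def B_def by auto
      have "{p. prime p \<and> p \<le> m} = A \<union> B" "A \<inter> B = {}" unfolding A_def B_def m by auto
      then have "prim m = \<Prod>A * \<Prod>B" unfolding prim_def using fA prod.union_disjoint by metis
      moreover have "\<Prod>A \<le> 4^(k+1)" using less[of "k+1"] m k1 unfolding prim_def A_def by simp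
      moreover have "\<Prod>B \<le> 4^k"
      proof -
        have "\<Prod>B dvd ((2*k+1) choose k)"
        proof (rule prod_primes_dvd[OF fA(2)], intro ballI conjI)
          fix p assume p: "p \<in> B"
          then show "prime p" by (simp add: B_def)
          have e: "fact k * fact (k+1) * ((2*k+1) choose k) = fact (2*k+1)"
            using binomial_fact_lemma[of k "2*k+1"] by (simp add: mult_2)
          have "prime p" "p \<le> 2*k+1" using p by (auto simp: B_def)
          then have "p dvd fact (2*k+1)" using prime_dvd_fact_iff by blast
          then have "p dvd fact k * fact (k+1) * ((2*k+1) choose k)" using e by simp
          moreover have "\<not> p dvd fact k" "\<not> p dvd fact (k+1)"
            using prime_dvd_fact_iff[OF \<open>prime p\<close>, of k] prime_dvd_fact_iff[OF \<open>prime p\<close>, of "k+1"] p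
            by (auto simp: B_def simp del: fact_Suc)
          ultimately show "p dvd ((2*k+1) choose k)" using p by (auto simp: B_def prime_dvd_mult_iff)
        qed
        then have "\<Prod>B \<le> (2*k+1) choose k" by (rule dvd_imp_le) simp
        then show ?thesis using central_le[of k] by simp
      qed
      ultimately have "prim m \<le> 4^(k+1) * 4^k" by (metis mult_le_mono)
      also have "\<dots> = 4^m" using m by (simp add: power_add[symmetric])
      finally show ?thesis .
    qed
  qed
qed

lemma mult_card:
  fixes p m N :: nat
  assumes p: "prime p" and m: "0 < m" "m \<le> N"
  shows "multiplicity p m = card {i \<in> {1..N}. p^i dvd m}"
proof -
  have np: "\<not> is_unit p" using p not_prime_unit by blast
  have m0: "m \<noteq> 0" using m by simp
  have iff: "p^i dvd m \<longleftrightarrow> i \<le> multiplicity p m" for i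
    by (rule power_dvd_iff_le_multiplicity[OF m0 np])
  have "p ^ multiplicity p m dvd m" using iff by blast
  then have "p ^ multiplicity p m \<le> m" using m dvd_imp_le by blast
  moreover have "multiplicity p m < 2 ^ multiplicity p m" by (rule less_exp)
  moreover have "2 ^ multiplicity p m \<le> p ^ multiplicity p m"
    using prime_ge_2_nat[OF p] by (rule power_mono) simp
  ultimately have le: "multiplicity p m \<le> N" using m by linarith
  have "i \<in> {i \<in> {1..N}. p^i dvd m} \<longleftrightarrow> i \<in> {1..multiplicity p m}" for i
    using le iff[of i] by auto
  then have "{i \<in> {1..N}. p^i dvd m} = {1..multiplicity p m}" by blast
  then show ?thesis by simp
qed

lemma suc_div: "0 < (d::nat) \<Longrightarrow> Suc n div d = n div d + (if d dvd Suc n then 1 else 0)"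
  by (simp add: div_Suc dvd_eq_mod_eq_0)

lemma legendre:
  fixes p :: nat
  assumes p: "prime p"
  shows "n \<le> N \<Longrightarrow> multiplicity p (fact n) = (\<Sum>i\<in>{1..N}. n div p^i)"
proof (induction n)
  case 0
  then show ?case by simp
next
  case (Suc n)
  have pe: "prime_elem p" using p by simp
  have "multiplicity p (fact (Suc n) :: nat) = multiplicity p (Suc n * fact n)"
    by (simp add: fact_Suc)
  also have "\<dots> = multiplicity p (Suc n) + multiplicity p (fact n :: nat)"
    by (rule prime_elem_multiplicity_mult_distrib[OF pe]) auto
  also have "multiplicity p (Suc n) = card {i \<in> {1..N}. p^i dvd Suc n}"
    using mult_card[OF p, of "Suc n" N] Suc.prems by simp
  also have "\<dots> = (\<Sum>i\<in>{1..N}. if p^i dvd Suc n then 1 else 0)"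
    by (simp add: sum.inter_filter[symmetric])
  also have "multiplicity p (fact n :: nat) = (\<Sum>i\<in>{1..N}. n div p^i)"
    using Suc by simp
  also have "(\<Sum>i\<in>{1..N}. if p^i dvd Suc n then 1 else 0) + (\<Sum>i\<in>{1..N}. n div p^i)
      = (\<Sum>i\<in>{1..N}. Suc n div p^i)"
  proof -
    have q: "0 < p^i" for i using prime_gt_0_nat[OF p] by simp
    have "(\<Sum>i\<in>{1..N}. if p^i dvd Suc n then 1 else 0) + (\<Sum>i\<in>{1..N}. n div p^i)
        = (\<Sum>i\<in>{1..N}. (if p^i dvd Suc n then 1 else 0) + n div p^i)"
      by (simp add: sum.distrib)
    also have "\<dots> = (\<Sum>i\<in>{1..N}. Suc n div p^i)"
      by (rule sum.cong) (simp_all add: suc_div[OF q])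
    finally show ?thesis .
  qed
  finally show ?case .
qed

lemma div2_le: "2*m div (q::nat) \<le> 2*(m div q) + 1"
proof (cases "q = 0")
  case False
  have a: "m = q*(m div q) + m mod q" by simp
  have b: "m mod q < q" using False by simp
  have c: "q * (2*(m div q) + 2) = 2*(q*(m div q)) + 2*q" by (simp add: algebra_simps)
  have "2*m < q * (2*(m div q) + 2)" using a b c by linarith
  then have "2*m div q < 2*(m div q) + 2"
    using False by (simp add: div_less_iff_less_mult mult.commute)
  then show ?thesis by simp
qed simp

lemma vC:
  fixes p m :: nat
  assumes p: "prime p" and m: "m \<ge> 1"
  shows "p ^ multiplicity p ((2*m) choose m) \<le> 2*m"
proof (rule ccontr)
  assume H: "\<not> ?thesis"
  define v where "v = multiplicity p ((2*m) choose m)"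
  define C where "C = (2*m) choose m"
  have pe: "prime_elem p" using p by simp
  have l: "fact m * fact (2*m - m) * ((2*m) choose m) = (fact (2*m)::nat)"
    by (rule binomial_fact_lemma) simp
  have mm: "2*m - m = m" by simp
  have e: "fact m * fact m * C = (fact (2*m) :: nat)"
    using l unfolding mm C_def .
  have fz: "(fact m :: nat) \<noteq> 0" by simp
  have cz: "C \<noteq> 0" unfolding C_def by simp
  have "multiplicity p (fact (2*m) :: nat) = multiplicity p (fact m * fact m * C)"
    by (simp only: e)
  also have "\<dots> = multiplicity p (fact m * fact m :: nat) + multiplicity p C"
    by (rule prime_elem_multiplicity_mult_distrib[OF pe]) (use fz cz in simp_all)
  also have "multiplicity p (fact m * fact m :: nat) = multiplicity p (fact m :: nat) + multiplicity p (fact m :: nat)"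
    by (rule prime_elem_multiplicity_mult_distrib[OF pe fz fz])
  finally have ch: "multiplicity p (fact (2*m) :: nat) = multiplicity p (fact m :: nat) + multiplicity p (fact m :: nat) + v"
    unfolding v_def C_def .
  have l1: "multiplicity p (fact (2*m) :: nat) = (\<Sum>i\<in>{1..2*m}. 2*m div p^i)"
    by (rule legendre[OF p]) simp
  have l2: "multiplicity p (fact m :: nat) = (\<Sum>i\<in>{1..2*m}. m div p^i)"
    by (rule legendre[OF p]) simp
  have s2: "(\<Sum>i\<in>{1..2*m}. 2*(m div p^i)) = 2 * (\<Sum>i\<in>{1..2*m}. m div p^i)"
    by (rule sum_distrib_left[symmetric])
  have eq: "(\<Sum>i\<in>{1..2*m}. 2*m div p^i) = (\<Sum>i\<in>{1..2*m}. 2*(m div p^i)) + v"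
    using ch l1 l2 s2 by linarith
  define t where "t i = 2*m div p^i - 2*(m div p^i)" for i
  have ge: "2*(m div p^i) \<le> 2*m div p^i" for i
  proof -
    have q: "0 < p^i" using prime_gt_0_nat[OF p] by simp
    have "(m div p^i) * p^i \<le> m" by (rule div_times_less_eq_dividend)
    then have "2*(m div p^i) * p^i \<le> 2*m" by simp
    then show ?thesis using less_eq_div_iff_mult_less_eq[OF q] by blast
  qed
  have "(\<Sum>i\<in>{1..2*m}. t i) = (\<Sum>i\<in>{1..2*m}. 2*m div p^i) - (\<Sum>i\<in>{1..2*m}. 2*(m div p^i))"
    unfolding t_def by (rule sum_subtractf_nat) (use ge in blast)
  then have vs: "(\<Sum>i\<in>{1..2*m}. t i) = v" using eq by linarith
  have t1: "t i \<le> 1" for i unfolding t_def using div2_le[of m "p^i"] by linarith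
  have v1: "v \<ge> 1"
  proof (rule ccontr)
    assume "\<not> v \<ge> 1"
    then have "v = 0" by simp
    then show False using H m unfolding v_def by simp
  qed
  have t0: "t i = 0" if "i \<ge> v" for i
  proof -
    have "1 \<le> p" using prime_gt_0_nat[OF p] by simp
    then have "p^v \<le> p^i" using that by (rule power_increasing[rotated])
    then have "2*m < p^i" using H unfolding v_def by linarith
    then show ?thesis unfolding t_def by simp
  qed
  have "(\<Sum>i\<in>{1..2*m}. t i) = (\<Sum>i\<in>{1..2*m}. if i < v then t i else 0)"
    by (rule sum.cong) (auto simp: t0)
  also have "\<dots> = (\<Sum>i\<in>{i\<in>{1..2*m}. i < v}. t i)"
    by (rule sum.inter_filter[symmetric]) simp
  also have "\<dots> \<le> (\<Sum>i\<in>{i\<in>{1..2*m}. i < v}. 1)"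
    by (rule sum_mono) (rule t1)
  also have "\<dots> = card {i\<in>{1..2*m}. i < v}" by simp
  also have "\<dots> \<le> card {1..<v}" by (rule card_mono) auto
  also have "\<dots> = v - 1" by simp
  finally show False using vs v1 by linarith
qed

lemma C_le:
  fixes m :: nat
  assumes m: "m \<ge> 1"
  shows "(2*m) choose m \<le> (2*m) ^ card {p. prime p \<and> p \<le> 2*m}"
proof -
  define C where "C = (2*m) choose m"
  have C0: "C > 0" unfolding C_def by simp
  have "C = (\<Prod>p\<in>prime_factors C. p ^ multiplicity p C)"
    using prime_factorization_nat[OF C0] .
  also have "\<dots> \<le> (\<Prod>p\<in>prime_factors C. 2*m)"
    by (rule prod_mono) (auto simp: C_def intro!: vC m)
  also have "\<dots> = (2*m) ^ card (prime_factors C)" by simp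
  also have "\<dots> \<le> (2*m) ^ card {p. prime p \<and> p \<le> 2*m}"
  proof (rule power_increasing)
    have "prime_factors C \<subseteq> {p. prime p \<and> p \<le> 2*m}"
    proof
      fix p assume "p \<in> prime_factors C"
      then have pp: "prime p" "p dvd C" by (auto simp: in_prime_factors_iff)
      have "C dvd fact (2*m)"
      proof -
        have "fact m * fact m * ((2*m) choose m) = (fact (2*m) :: nat)"
          using binomial_fact_lemma[of m "2*m"] by (simp add: mult_2)
        then show ?thesis unfolding C_def by (metis dvd_triv_right)
      qed
      then have "p dvd fact (2*m)" using pp dvd_trans by blast
      then show "p \<in> {p. prime p \<and> p \<le> 2*m}" using pp prime_dvd_fact_iff by blast
    qed
    then show "card (prime_factors C) \<le> card {p. prime p \<and> p \<le> 2*m}"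
      by (rule card_mono[rotated]) simp
  qed (use m in simp)
  finally show ?thesis unfolding C_def .
qed

lemma cheb:
  fixes m :: nat
  assumes m: "m \<ge> 1"
  shows "real m * ln 2 \<le> real (card {p. prime p \<and> p \<le> 2*m}) * ln (2 * real m)"
proof -
  have "(real (2*m) / real m) ^ m \<le> real ((2*m) choose m)"
    by (rule binomial_ge_n_over_k_pow_k) simp
  then have "(2::real) ^ m \<le> real ((2*m) choose m)" using m by simp
  also have "\<dots> \<le> real ((2*m) ^ card {p. prime p \<and> p \<le> 2*m})"
    using C_le[OF m] by linarith
  finally have "(2::real)^m \<le> (2 * real m) ^ card {p. prime p \<and> p \<le> 2*m}" by simp
  then have "ln ((2::real)^m) \<le> ln ((2 * real m) ^ card {p. prime p \<and> p \<le> 2*m})"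
    by (subst ln_le_cancel_iff) (use m in auto)
  moreover have "ln ((2::real)^m) = real m * ln 2" by (simp add: ln_realpow)
  moreover have "ln ((2 * real m) ^ card {p. prime p \<and> p \<le> 2*m})
      = real (card {p. prime p \<and> p \<le> 2*m}) * ln (2 * real m)"
  proof -
    have pos: "0 < 2 * real m" using m by simp
    show ?thesis by (rule ln_realpow)
  qed
  ultimately show ?thesis by linarith
qed

lemma ln4: "ln (4::real) = 2 * ln 2"
proof -
  have "ln (4::real) = ln 2 + ln 2" using ln_mult[of "2::real" 2] by simp
  then show ?thesis by simp
qed

lemma nth_prime_upper:
  assumes n: "n \<ge> 2"
  shows "real (nth_prime n) \<le> 26 * real n * ln (real n)"
proof -
  define q where "q = nth_prime n"
  have q3: "q \<ge> n + 1" using nth_prime_ge[of n] n unfolding q_def by simp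
  define m where "m = (q - 1) div 2"
  have "2 \<le> q - 1" using q3 n by linarith
  then have m1: "m \<ge> 1" unfolding m_def using div_le_mono[of 2 "q-1" 2] by simp
  have m2: "2*m \<le> q - 1" unfolding m_def by simp
  have m3: "q - 2 \<le> 2*m" unfolding m_def by presburger
  have "2*m < nth_prime n" using m2 q3 unfolding q_def by linarith
  then have pi: "card {p. prime p \<and> p \<le> 2*m} \<le> n - 1" using pi_le[of n "2*m"] n by simp
  have ch: "real m * ln 2 \<le> real (card {p. prime p \<and> p \<le> 2*m}) * ln (2 * real m)"
    by (rule cheb[OF m1])
  have l0: "0 \<le> ln (2 * real m)" using m1 by simp
  have lq: "ln (2 * real m) \<le> ln (real q)"
    using m1 m2 q3 by (subst ln_le_cancel_iff) auto
  have "real (card {p. prime p \<and> p \<le> 2*m}) \<le> real n" using pi by simp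
  then have "real (card {p. prime p \<and> p \<le> 2*m}) * ln (2 * real m) \<le> real n * ln (real q)"
    using l0 lq by (intro mult_mono) auto
  with ch have A: "real m * ln 2 \<le> real n * ln (real q)" by linarith
  have "real (q - 2) \<le> real (2*m)" using m3 by (rule of_nat_mono)
  moreover have "real (q - 2) = real q - 2" using q3 n by (simp add: of_nat_diff)
  ultimately have rm: "(real q - 2) / 2 \<le> real m" by simp
  have "(real q - 2) / 2 * (2/3) \<le> real m * ln 2"
    using rm ln2_ge_two_thirds q3 by (intro mult_mono) auto
  moreover have "(real q - 2) / 2 * (2/3) = real q / 3 - 2/3" by (simp add: field_simps)
  ultimately have B: "real q \<le> 2 + 3 * (real n * ln (real q))" using A by linarith
  define s where "s = sqrt (real q)"
  have s1: "s \<ge> 1" unfolding s_def using q3 by simp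
  have qs: "real q = s * s" unfolding s_def by simp
  have "ln (real q) = 2 * ln s" unfolding s_def by (simp add: ln_sqrt)
  also have "\<dots> \<le> 2 * (s - 1)" using ln_le_minus_one[of s] s1 by simp
  finally have "ln (real q) \<le> 2 * s" by simp
  then have "real n * ln (real q) \<le> real n * (2 * s)" by (rule mult_left_mono) simp
  moreover have "real n * (2 * s) = 2 * (real n * s)" by simp
  ultimately have C: "s * s \<le> 2 + 6 * (real n * s)" using B qs by linarith
  have s2: "s \<le> 6 * real n + 2"
  proof (rule ccontr)
    assume "\<not> ?thesis"
    then have "6 * real n + 2 < s" by simp
    then have "(6 * real n + 2) * s < s * s" using s1 by (intro mult_strict_right_mono) auto
    moreover have "(6 * real n + 2) * s = 6 * (real n * s) + 2 * s" by (simp add: algebra_simps)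
    ultimately show False using C s1 by linarith
  qed
  have "6 * real n + 2 \<le> 8 * real n" using n by simp
  with s2 have s3: "s \<le> 8 * real n" by linarith
  have "s * s \<le> (8 * real n) * (8 * real n)" using s3 s1 by (intro mult_mono) auto
  then have "real q \<le> (8 * real n) * (8 * real n)" using qs by simp
  then have "ln (real q) \<le> ln (64 * (real n * real n))"
    using q3 by (subst ln_le_cancel_iff) (auto simp: algebra_simps)
  also have "\<dots> = ln 64 + 2 * ln (real n)" using n by (simp add: ln_mult)
  also have "ln (64::real) = 6 * ln 2"
  proof -
    have "ln (64::real) = ln ((2::real)^6)" by simp
    also have "\<dots> = real 6 * ln 2" by (rule ln_realpow)
    finally show ?thesis by simp
  qed
  also have "6 * ln (2::real) \<le> 6 * ln (real n)" using n by simp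
  finally have D: "ln (real q) \<le> 8 * ln (real n)" by simp
  have ln2n: "ln 2 \<le> ln (real n)" using n by simp
  have "1 \<le> real n * ln (real n)"
  proof -
    have l23: "2/3 \<le> ln (real n)" using ln2_ge_two_thirds ln2n by linarith
    have "2 * (2/3) \<le> real n * ln (real n)"
      using n l23 by (intro mult_mono) auto
    then show ?thesis by simp
  qed
  moreover have "real n * ln (real q) \<le> real n * (8 * ln (real n))" using D by (rule mult_left_mono) simp
  moreover have "real n * (8 * ln (real n)) = 8 * (real n * ln (real n))" by simp
  moreover have "26 * real n * ln (real n) = 26 * (real n * ln (real n))" by simp
  ultimately show ?thesis using B unfolding q_def by linarith
qed

lemma prod_enum_upper:
  assumes n: "n \<ge> 1"
  shows "(\<Prod>i<n. enumerate PR i) \<le> 4 ^ (enumerate PR (n-1))"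
proof -
  let ?e = "enumerate PR"
  have sm: "strict_mono ?e" using enumerate_mono[OF _ inf_PR] by (simp add: strict_mono_def)
  have inj: "inj_on ?e {..<n}" using strict_mono_imp_inj_on[OF sm] by (simp add: inj_on_def)
  have "(\<Prod>i<n. ?e i) = \<Prod>(?e ` {..<n})" by (simp add: prod.reindex[OF inj])
  also have "\<dots> \<le> \<Prod>{p. prime p \<and> p \<le> ?e (n-1)}"
  proof -
    have sub: "?e ` {..<n} \<subseteq> {p. prime p \<and> p \<le> ?e (n-1)}"
    proof
      fix x assume "x \<in> ?e ` {..<n}"
      then obtain i where i: "i < n" "x = ?e i" by auto
      have "prime x" using i enumerate_in_set[OF inf_PR, of i] by simp
      moreover have "x \<le> ?e (n-1)" using i inf_PR by simp
      ultimately show "x \<in> {p. prime p \<and> p \<le> ?e (n-1)}" by simp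
    qed
    have "\<Prod>(?e ` {..<n}) dvd \<Prod>{p. prime p \<and> p \<le> ?e (n-1)}"
      by (rule prod_dvd_prod_subset[OF _ sub]) simp
    moreover have "\<Prod>{p. prime p \<and> p \<le> ?e (n-1)} > 0"
      by (rule prod_pos) (auto simp: prime_gt_0_nat)
    ultimately show ?thesis by (rule dvd_imp_le)
  qed
  also have "\<dots> = prim (?e (n-1))" by (simp add: prim_def)
  also have "\<dots> \<le> 4 ^ (?e (n-1))" by (rule prim_le)
  finally show ?thesis .
qed

lemma prod_enum_lower:
  shows "(n div 2 + 2) ^ (n - n div 2) \<le> (\<Prod>i<n. enumerate PR i)"
proof -
  let ?e = "enumerate PR"
  have "(n div 2 + 2) ^ (n - n div 2) = (\<Prod>i\<in>{n div 2..<n}. n div 2 + 2)" by simp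
  also have "\<dots> \<le> (\<Prod>i\<in>{n div 2..<n}. ?e i)"
  proof (rule prod_mono)
    fix i assume "i \<in> {n div 2..<n}"
    then have "n div 2 + 2 \<le> i + 2" by simp
    also have "\<dots> \<le> ?e i" by (rule enum_ge)
    finally show "0 \<le> n div 2 + 2 \<and> n div 2 + 2 \<le> ?e i" by simp
  qed
  also have "\<dots> \<le> (\<Prod>i<n. ?e i)"
  proof -
    have "(\<Prod>i\<in>{n div 2..<n}. ?e i) dvd (\<Prod>i<n. ?e i)"
      by (rule prod_dvd_prod_subset) auto
    moreover have "(\<Prod>i<n. ?e i) > 0"
    proof (rule prod_pos)
      fix i show "0 < ?e i" using enum_ge[of i] by simp
    qed
    ultimately show ?thesis by (rule dvd_imp_le)
  qed
  finally show ?thesis .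
qed

lemma nth_prime_lower:
  assumes n: "n \<ge> 4"
  shows "real n * ln (real n) \<le> 8 * ln 2 * real (nth_prime n)"
proof -
  define q where "q = nth_prime n"
  define a where "a = n div 2 + 2"
  define k where "k = n - n div 2"
  have q_eq: "q = enumerate PR (n-1)" using n unfolding q_def nth_prime_def by simp
  have "a ^ k \<le> 4 ^ q"
    using prod_enum_lower[of n] prod_enum_upper[of n] n unfolding a_def k_def q_eq by linarith
  then have "real a ^ k \<le> 4 ^ q"
    by (metis of_nat_le_iff of_nat_numeral of_nat_power)
  then have "ln (real a ^ k) \<le> ln (4 ^ q)"
    unfolding a_def by (subst ln_le_cancel_iff) auto
  then have E: "real k * ln (real a) \<le> real q * ln 4" by (simp add: ln_realpow)
  have "ln (4::real) = 2 * ln 2"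
by (rule ln4)
  note E = E[unfolded this]
  have k2: "real n / 2 \<le> real k" unfolding k_def by linarith
  have a2: "real n / 2 \<le> real a" unfolding a_def by linarith
  have n0: "0 < real n" using n by simp
  have "ln (real n / 2) \<le> ln (real a)" using a2 n by (subst ln_le_cancel_iff) auto
  moreover have "ln (real n / 2) = ln (real n) - ln 2" using n by (simp add: ln_div)
  moreover have "ln 4 \<le> ln (real n)" using n by simp
  moreover have "ln (4::real) = 2 * ln 2"
by (rule ln4)
  ultimately have la: "ln (real n) / 2 \<le> ln (real a)" by linarith
  have "real n / 2 * (ln (real n) / 2) \<le> real k * ln (real a)"
    using k2 la n by (intro mult_mono) auto
  moreover have "real n / 2 * (ln (real n) / 2) = (real n * ln (real n)) / 4" by simp
  moreover have "real q * (2 * ln 2) = 2 * (ln 2 * real q)" by simp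
  moreover have "8 * ln 2 * real q = 8 * (ln 2 * real q)" by simp
  ultimately show ?thesis using E unfolding q_def by linarith
qed

lemma iter_Suc: "iter_prime (Suc k) j = nth_prime (iter_prime k j)"
  by (simp add: iter_prime_def)

lemma iter_0: "iter_prime 0 j = j"
  by (simp add: iter_prime_def)

lemma iter_ge: "j \<ge> 1 \<Longrightarrow> iter_prime k j \<ge> j"
proof (induction k)
  case 0 then show ?case by (simp add: iter_0)
next
  case (Suc k)
  then have "iter_prime k j \<ge> 1" by simp
  then have "nth_prime (iter_prime k j) \<ge> iter_prime k j + 1" by (rule nth_prime_ge)
  then show ?case using Suc by (simp add: iter_Suc)
qed

lemma step_upper:
  assumes a: "a \<ge> 2"
  shows "ln (real (nth_prime a)) \<le> ln (real a) + ln (ln (real a)) + ln 26"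
proof -
  have la: "0 < ln (real a)" using a by simp
  have p0: "0 < real (nth_prime a)" using nth_prime_ge[of a] a by simp
  have "ln (real (nth_prime a)) \<le> ln (26 * real a * ln (real a))"
    using nth_prime_upper[OF a] p0 by (subst ln_le_cancel_iff) auto
  also have "\<dots> = ln 26 + ln (real a) + ln (ln (real a))"
    using la a by (simp add: ln_mult)
  finally show ?thesis by simp
qed

lemma step_lower:
  assumes a: "a \<ge> 4"
  shows "ln (real a) + ln (ln (real a)) - ln (8 * ln 2) \<le> ln (real (nth_prime a))"
proof -
  have la: "0 < ln (real a)" using a by simp
  have l2: "0 < ln (2::real)" by simp
  have "ln (real a * ln (real a)) \<le> ln (8 * ln 2 * real (nth_prime a))"
  proof -
    have "0 < real (nth_prime a)" using nth_prime_ge[of a] a by simp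
    then have "0 < 8 * ln 2 * real (nth_prime a)" using l2 by simp
    moreover have "0 < real a * ln (real a)" using la a by simp
    ultimately show ?thesis using nth_prime_lower[OF a] by (subst ln_le_cancel_iff) auto
  qed
  moreover have "ln (real a * ln (real a)) = ln (real a) + ln (ln (real a))"
    using la a by (simp add: ln_mult)
  moreover have "ln (8 * ln 2 * real (nth_prime a)) = ln (8 * ln 2) + ln (real (nth_prime a))"
    using l2 nth_prime_ge[of a] a by (subst ln_mult) auto
  ultimately show ?thesis by linarith
qed

lemma iter_upper:
  fixes j :: nat
  assumes j: "j \<ge> 2"
    and H: "ln (real j) + real j * (2 * ln (real j) + ln 26) \<le> real j ^ 2"
  shows "ln (real (iter_prime j j)) \<le> ln (real j) + real j * (2 * ln (real j) + ln 26)"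
proof -
  define L where "L k = ln (real (iter_prime k j))" for k
  define D where "D = 2 * ln (real j) + ln 26"
  have D0: "0 \<le> D" unfolding D_def using j by simp
  have "k \<le> j \<Longrightarrow> L k \<le> ln (real j) + real k * D" for k
  proof (induction k)
    case 0 then show ?case by (simp add: L_def iter_0)
  next
    case (Suc k)
    then have IH: "L k \<le> ln (real j) + real k * D" by simp
    have "real k * D \<le> real j * D" using Suc.prems D0 by (intro mult_right_mono) auto
    then have "L k \<le> real j ^ 2" using IH H unfolding D_def by linarith
    moreover have ak: "iter_prime k j \<ge> 2" using iter_ge[of j k] j by simp
    moreover have "0 < L k" unfolding L_def using ak by simp
    ultimately have "ln (L k) \<le> ln (real j ^ 2)" using j by (subst ln_le_cancel_iff) auto
    also have "\<dots> = 2 * ln (real j)" by (simp add: ln_realpow)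
    finally have lL: "ln (L k) \<le> 2 * ln (real j)" .
    have "L (Suc k) \<le> L k + ln (L k) + ln 26"
      unfolding L_def iter_Suc using step_upper[OF ak] .
    then show ?case using IH lL unfolding D_def by (simp add: algebra_simps)
  qed
  then have "L j \<le> ln (real j) + real j * D" by simp
  then show ?thesis unfolding L_def D_def .
qed

lemma iter_lower:
  fixes j :: nat
  assumes j: "j \<ge> 4"
    and H: "1 + ln (8 * ln 2) \<le> ln (ln (real j))"
  shows "real j * ln (real j) - (ln (8 * ln 2) + 2) * real j \<le> ln (real (iter_prime j j))"
proof -
  define L where "L k = ln (real (iter_prime k j))" for k
  define c where "c = ln (8 * ln (2::real))"
  have c0: "0 \<le> c"
  proof -
    have "1 \<le> 8 * ln (2::real)" using ln2_ge_two_thirds by linarith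
    then show ?thesis unfolding c_def by simp
  qed
  have ak: "iter_prime k j \<ge> 4" for k using iter_ge[of j k] j by simp
  have lj: "ln (real j) \<le> L k" for k
    unfolding L_def using iter_ge[of j k] j by (subst ln_le_cancel_iff) auto
  have lj0: "0 < ln (real j)" using j by simp
  have step: "L (Suc k) \<ge> L k + ln (L k) - c" for k
    unfolding L_def iter_Suc c_def using step_lower[OF ak[of k]] by simp
  have Lk: "L k \<ge> real k" for k
  proof (induction k)
    case 0 then show ?case using lj[of 0] lj0 by simp
  next
    case (Suc k)
    have "ln (ln (real j)) \<le> ln (L k)" using lj[of k] lj0 by (subst ln_le_cancel_iff) auto
    then have "1 + c \<le> ln (L k)" using H unfolding c_def by linarith
    then show ?case using step[of k] Suc by simp
  qed
  define g where "g k = real k * ln (real k) - (c + 2) * real k" for k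
  have "g k \<le> L k" for k
  proof (induction k)
    case 0 then show ?case using lj[of 0] lj0 by (simp add: g_def)
  next
    case (Suc k)
    show ?case
    proof (cases "k = 0")
      case True
      then show ?thesis using Lk[of 1] c0 by (simp add: g_def)
    next
      case False
      then have k1: "real k \<ge> 1" by simp
      have "ln (real k) \<le> ln (L k)" using Lk[of k] k1 by (subst ln_le_cancel_iff) auto
      then have A: "L (Suc k) \<ge> g k + ln (real k) - c" using step[of k] Suc.IH by linarith
      have "ln (real (Suc k)) - ln (real k) = ln (real (Suc k) / real k)"
        using k1 by (simp add: ln_div)
      also have "\<dots> \<le> real (Suc k) / real k - 1"
        using k1 by (intro ln_le_minus_one) simp
      also have "\<dots> = 1 / real k" using k1 by (simp add: field_simps)
      finally have B: "ln (real (Suc k)) - ln (real k) \<le> 1 / real k" .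
      have "real (Suc k) * (ln (real (Suc k)) - ln (real k)) \<le> real (Suc k) * (1 / real k)"
        using B by (rule mult_left_mono) simp
      also have "\<dots> = 1 + 1 / real k" using k1 by (simp add: field_simps)
      also have "\<dots> \<le> 2" using k1 by simp
      finally have C: "real (Suc k) * ln (real (Suc k)) \<le> real (Suc k) * ln (real k) + 2"
        by (simp add: algebra_simps)
      have "g (Suc k) = real (Suc k) * ln (real (Suc k)) - (c + 2) * real (Suc k)" by (simp add: g_def)
      also have "\<dots> \<le> real (Suc k) * ln (real k) + 2 - (c + 2) * real (Suc k)" using C by linarith
      also have "\<dots> = g k + ln (real k) - c" by (simp add: g_def algebra_simps)
      finally show ?thesis using A by linarith
    qed
  qed
  then have "g j \<le> L j" .
  then show ?thesis unfolding g_def L_def c_def by simp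
qed

lemma r1: "eventually (\<lambda>j::nat. ln (real j) + real j * (2 * ln (real j) + ln 26) \<le> real j ^ 2) sequentially"
  by real_asymp
lemma r2: "(\<lambda>j::nat. (ln (real j) + real j * (2 * ln (real j) + ln 26)) / (real j * ln (real j))) \<longlonglongrightarrow> 2"
  by real_asymp
lemma r3: "eventually (\<lambda>j::nat. 1 + ln (8 * ln 2) \<le> ln (ln (real j))) sequentially"
  by real_asymp
lemma r4: "(\<lambda>j::nat. (real j * ln (real j) - (ln (8 * ln 2) + 2) * real j) / (real j * ln (real j))) \<longlonglongrightarrow> 1"
  by real_asymp

theorem corollary12:
  shows "1 \<le> liminf (\<lambda>j. ereal (ln (real (iter_prime j j)) / (real j * ln (real j))))
       \<and> liminf (\<lambda>j. ereal (ln (real (iter_prime j j)) / (real j * ln (real j))))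
           \<le> limsup (\<lambda>j. ereal (ln (real (iter_prime j j)) / (real j * ln (real j))))
       \<and> limsup (\<lambda>j. ereal (ln (real (iter_prime j j)) / (real j * ln (real j)))) \<le> 2"
proof -
  define u where "u j = (ln (real j) + real j * (2 * ln (real j) + ln 26)) / (real j * ln (real j))" for j :: nat
  define w where "w j = (real j * ln (real j) - (ln (8 * ln 2) + 2) * real j) / (real j * ln (real j))" for j :: nat
  have ev_u: "eventually (\<lambda>j. ereal (ln (real (iter_prime j j)) / (real j * ln (real j))) \<le> ereal (u j)) sequentially"
    using r1 eventually_ge_at_top[of "2::nat"]
  proof eventually_elim
    case (elim j)
    have "0 < real j * ln (real j)" using elim by simp
    moreover have "ln (real (iter_prime j j)) \<le> ln (real j) + real j * (2 * ln (real j) + ln 26)"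
      using iter_upper[of j] elim by simp
    ultimately show ?case unfolding u_def by (simp add: divide_right_mono)
  qed
  have ev_w: "eventually (\<lambda>j. ereal (w j) \<le> ereal (ln (real (iter_prime j j)) / (real j * ln (real j)))) sequentially"
    using r3 eventually_ge_at_top[of "4::nat"]
  proof eventually_elim
    case (elim j)
    have "0 < real j * ln (real j)" using elim by simp
    moreover have "real j * ln (real j) - (ln (8 * ln 2) + 2) * real j \<le> ln (real (iter_prime j j))"
      using iter_lower[of j] elim by simp
    ultimately show ?case unfolding w_def by (simp add: divide_right_mono)
  qed
  have lu: "limsup (\<lambda>j. ereal (u j)) = ereal 2"
    by (rule lim_imp_Limsup) (use r2 in \<open>simp_all add: u_def\<close>)
  have lw: "liminf (\<lambda>j. ereal (w j)) = ereal 1"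
    by (rule lim_imp_Liminf) (use r4 in \<open>simp_all add: w_def\<close>)
  have A: "limsup (\<lambda>j. ereal (ln (real (iter_prime j j)) / (real j * ln (real j)))) \<le> limsup (\<lambda>j. ereal (u j))"
    by (rule Limsup_mono[OF ev_u])
  have B: "liminf (\<lambda>j. ereal (w j)) \<le> liminf (\<lambda>j. ereal (ln (real (iter_prime j j)) / (real j * ln (real j))))"
    by (rule Liminf_mono[OF ev_w])
  have C: "liminf (\<lambda>j. ereal (ln (real (iter_prime j j)) / (real j * ln (real j))))
           \<le> limsup (\<lambda>j. ereal (ln (real (iter_prime j j)) / (real j * ln (real j))))"
    by (rule Liminf_le_Limsup) simp
  show ?thesis using A B C lu lw by (simp add: one_ereal_def)
qed

end
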